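(* Let $H$ be a group and $X=\{x_1,\dots,x_n\}$ a finite set of elements of $H$. Let $H\trianglerighteq N_1\trianglerighteq N_2\trianglerighteq\cdots$ be a central series of $H$ such that $[H,N_i]=N_{i+1}$ for all $i\ge1$. Suppose that for every $i\ge1$ the quotient $H/N_i$ is normally generated by $\{x_1N_i,\dots,x_nN_i\}$. Let $\Gamma=\varprojlim_i H/N_i$ and let $h:H\to\Gamma$ be the natural map. Then $\Gamma$ is normally generated by $\{h(x_1),\dots,h(x_n)\}$.
   Context: A group is normally generated by a subset if the smallest normal subgroup containing that subset is the whole group. *)

theory Defs
  imports "HOL-Algebra.Algebra"
begin

definition normal_closure :: "('a, 'b) monoid_scheme \<Rightarrow> 'a set \<Rightarrow> 'a set" where
  "normal_closure G S = \<Inter> {N. N \<lhd> G \<and> S \<subseteq> N}"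

definition normally_generated_by :: "('a, 'b) monoid_scheme \<Rightarrow> 'a set \<Rightarrow> bool" where
  "normally_generated_by G S \<longleftrightarrow> S \<subseteq> carrier G \<and> normal_closure G S = carrier G"

definition commutator_subgroup :: "('a, 'b) monoid_scheme \<Rightarrow> 'a set \<Rightarrow> 'a set \<Rightarrow> 'a set" where
  "commutator_subgroup G A B =
     generate G (\<Union>a\<in>A. \<Union>b\<in>B. {a \<otimes>\<^bsub>G\<^esub> b \<otimes>\<^bsub>G\<^esub> inv\<^bsub>G\<^esub> a \<otimes>\<^bsub>G\<^esub> inv\<^bsub>G\<^esub> b})"

text \<open>Inverse limit of the quotients H / N i (i = 0,1,2,...; index 0 corresponds to N_1):
  compatible sequences of cosets, with componentwise multiplication.\<close>
definition inv_limit_quot :: "('a, 'b) monoid_scheme \<Rightarrow> (nat \<Rightarrow> 'a set) \<Rightarrow> (nat \<Rightarrow> 'a set) monoid" where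
  "inv_limit_quot H N =
    \<lparr> carrier = {f. (\<forall>i. f i \<in> carrier (H Mod N i)) \<and> (\<forall>i. f (Suc i) \<subseteq> f i)},
      monoid.mult = (\<lambda>f g i. f i <#>\<^bsub>H\<^esub> g i),
      monoid.one = N \<rparr>"

definition inv_limit_map :: "('a, 'b) monoid_scheme \<Rightarrow> (nat \<Rightarrow> 'a set) \<Rightarrow> 'a \<Rightarrow> (nat \<Rightarrow> 'a set)" where
  "inv_limit_map H N x = (\<lambda>i. N i #>\<^bsub>H\<^esub> x)"

end

theory Submission
  imports Defs
begin


definition comm :: "('a, 'b) monoid_scheme \<Rightarrow> 'a \<Rightarrow> 'a \<Rightarrow> 'a" where
  "comm G x y = x \<otimes>\<^bsub>G\<^esub> y \<otimes>\<^bsub>G\<^esub> inv\<^bsub>G\<^esub> x \<otimes>\<^bsub>G\<^esub> inv\<^bsub>G\<^esub> y"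

fun cw :: "('a, 'b) monoid_scheme \<Rightarrow> ('c \<Rightarrow> 'a) \<Rightarrow> ('c \<Rightarrow> 'a) \<Rightarrow> 'c list \<Rightarrow> 'a" where
  "cw G u v [] = \<one>\<^bsub>G\<^esub>"
| "cw G u v (x # xs) = comm G (u x) (v x) \<otimes>\<^bsub>G\<^esub> cw G u v xs"

definition central :: "('a, 'b) monoid_scheme \<Rightarrow> 'a \<Rightarrow> bool" where
  "central G z \<longleftrightarrow> z \<in> carrier G \<and> (\<forall>g\<in>carrier G. z \<otimes>\<^bsub>G\<^esub> g = g \<otimes>\<^bsub>G\<^esub> z)"

context group
begin

lemma cancel1[simp]: "x \<in> carrier G \<Longrightarrow> y \<in> carrier G \<Longrightarrow> x \<otimes> (inv x \<otimes> y) = y"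
  by (simp add: m_assoc[symmetric])

lemma cancel2[simp]: "x \<in> carrier G \<Longrightarrow> y \<in> carrier G \<Longrightarrow> inv x \<otimes> (x \<otimes> y) = y"
  by (simp add: m_assoc[symmetric])

lemma comm_closed[simp]: "x \<in> carrier G \<Longrightarrow> y \<in> carrier G \<Longrightarrow> comm G x y \<in> carrier G"
  by (simp add: comm_def)

lemma cw_closed[simp]: "(\<And>x. x \<in> set xs \<Longrightarrow> u x \<in> carrier G \<and> v x \<in> carrier G) \<Longrightarrow> cw G u v xs \<in> carrier G"
  by (induction xs) auto

lemma comm_one_right[simp]: "x \<in> carrier G \<Longrightarrow> comm G x \<one> = \<one>"
  by (simp add: comm_def)

lemma comm_one_left[simp]: "x \<in> carrier G \<Longrightarrow> comm G \<one> x = \<one>"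
  by (simp add: comm_def)

lemma central_comm: "central G z \<Longrightarrow> g \<in> carrier G \<Longrightarrow> z \<otimes> g = g \<otimes> z"
  by (simp add: central_def)

lemma central_one[simp]: "central G \<one>"
  by (simp add: central_def)

lemma central_mult: "central G a \<Longrightarrow> central G b \<Longrightarrow> central G (a \<otimes> b)"
proof -
  assume a: "central G a" and b: "central G b"
  have ac: "a \<in> carrier G" and bc: "b \<in> carrier G" using a b unfolding central_def by auto
  show ?thesis unfolding central_def
  proof (intro conjI ballI)
    show "a \<otimes> b \<in> carrier G" using ac bc by simp
    fix g assume g: "g \<in> carrier G"
    have "a \<otimes> b \<otimes> g = a \<otimes> (b \<otimes> g)" using ac bc g by (simp add: m_assoc)
    also have "\<dots> = a \<otimes> (g \<otimes> b)" using b g unfolding central_def by metis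
    also have "\<dots> = a \<otimes> g \<otimes> b" using ac bc g by (simp add: m_assoc)
    also have "\<dots> = g \<otimes> a \<otimes> b" using a g unfolding central_def by metis
    also have "\<dots> = g \<otimes> (a \<otimes> b)" using ac bc g by (simp add: m_assoc)
    finally show "a \<otimes> b \<otimes> g = g \<otimes> (a \<otimes> b)" .
  qed
qed

lemma comm_eq_one_iff: "x \<in> carrier G \<Longrightarrow> y \<in> carrier G \<Longrightarrow> comm G x y = \<one> \<longleftrightarrow> x \<otimes> y = y \<otimes> x"
proof -
  assume x: "x \<in> carrier G" and y: "y \<in> carrier G"
  have "comm G x y = \<one> \<longleftrightarrow> x \<otimes> y \<otimes> inv x = \<one> \<otimes> y"
    using inv_solve_right'[of "\<one>" "x \<otimes> y \<otimes> inv x" y] x y by (simp add: comm_def)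
  also have "\<dots> \<longleftrightarrow> x \<otimes> y = y \<otimes> x"
    using inv_solve_right'[of y "x \<otimes> y" x] x y by simp
  finally show ?thesis .
qed

lemma comm_central_right: "central G z \<Longrightarrow> x \<in> carrier G \<Longrightarrow> comm G x z = \<one>"
proof -
  assume c: "central G z" and x: "x \<in> carrier G"
  have zc: "z \<in> carrier G" using c unfolding central_def by blast
  have e: "z \<otimes> x = x \<otimes> z" using c x unfolding central_def by blast
  show ?thesis using comm_eq_one_iff[of x z] x zc e by simp
qed

lemma comm_central_left: "central G z \<Longrightarrow> x \<in> carrier G \<Longrightarrow> comm G z x = \<one>"
proof -
  assume c: "central G z" and x: "x \<in> carrier G"
  have zc: "z \<in> carrier G" using c unfolding central_def by blast
  have e: "z \<otimes> x = x \<otimes> z" using c x unfolding central_def by blast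
  show ?thesis using comm_eq_one_iff[of z x] x zc e by simp
qed

lemma comm_mult_right:
  assumes x: "x \<in> carrier G" and a: "a \<in> carrier G" and b: "b \<in> carrier G"
    and c: "central G (comm G x b)"
  shows "comm G x (a \<otimes> b) = comm G x a \<otimes> comm G x b"
proof -
  have "comm G x (a \<otimes> b) = x \<otimes> a \<otimes> inv x \<otimes> inv a \<otimes> (a \<otimes> comm G x b \<otimes> inv a)"
    using x a b by (simp add: comm_def m_assoc inv_mult_group)
  also have "a \<otimes> comm G x b \<otimes> inv a = comm G x b"
  proof -
    have e: "comm G x b \<otimes> a = a \<otimes> comm G x b" using c a unfolding central_def by blast
    have "a \<otimes> comm G x b \<otimes> inv a = comm G x b \<otimes> a \<otimes> inv a" using e by simp
    also have "\<dots> = comm G x b" using x a b by (simp add: m_assoc)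
    finally show ?thesis .
  qed
  finally show ?thesis using x a b by (simp add: comm_def m_assoc)
qed

lemma comm_mult_left:
  assumes u1: "u1 \<in> carrier G" and u2: "u2 \<in> carrier G" and v: "v \<in> carrier G"
    and c: "central G (comm G u2 v)"
  shows "comm G (u1 \<otimes> u2) v = comm G u2 v \<otimes> comm G u1 v"
proof -
  have "comm G (u1 \<otimes> u2) v = u1 \<otimes> comm G u2 v \<otimes> (v \<otimes> inv u1 \<otimes> inv v)"
    using u1 u2 v by (simp add: comm_def m_assoc inv_mult_group)
  also have "u1 \<otimes> comm G u2 v = comm G u2 v \<otimes> u1"
    using c u1 unfolding central_def by metis
  finally show ?thesis using u1 u2 v by (simp add: comm_def m_assoc)
qed

lemma comm_conj:
  assumes g: "g \<in> carrier G" and u: "u \<in> carrier G" and v: "v \<in> carrier G"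
    and c: "central G (comm G u (inv g \<otimes> v \<otimes> g))"
  shows "comm G (g \<otimes> u \<otimes> inv g) v = comm G u (inv g \<otimes> v \<otimes> g)"
proof -
  have "comm G (g \<otimes> u \<otimes> inv g) v = g \<otimes> comm G u (inv g \<otimes> v \<otimes> g) \<otimes> inv g"
    using g u v by (simp add: comm_def m_assoc inv_mult_group)
  also have "\<dots> = comm G u (inv g \<otimes> v \<otimes> g)"
  proof -
    let ?d = "comm G u (inv g \<otimes> v \<otimes> g)"
    have e: "?d \<otimes> g = g \<otimes> ?d" using c g unfolding central_def by blast
    have "g \<otimes> ?d \<otimes> inv g = ?d \<otimes> g \<otimes> inv g" using e by simp
    also have "\<dots> = ?d" using g u v by (simp add: m_assoc)
    finally show ?thesis .
  qed
  finally show ?thesis .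
qed

lemma cw_central:
  "(\<And>x. x \<in> set xs \<Longrightarrow> central G (comm G (u x) (v x))) \<Longrightarrow> central G (cw G u v xs)"
  by (induction xs) (auto intro: central_mult)

lemma cw_mult:
  assumes "\<And>x. x \<in> set xs \<Longrightarrow> u x \<in> carrier G \<and> a x \<in> carrier G \<and> b x \<in> carrier G"
    and "\<And>x. x \<in> set xs \<Longrightarrow> central G (comm G (u x) (b x))"
  shows "cw G u (\<lambda>x. a x \<otimes> b x) xs = cw G u a xs \<otimes> cw G u b xs"
  using assms
proof (induction xs)
  case Nil
  then show ?case by simp
next
  case (Cons y ys)
  have IH: "cw G u (\<lambda>x. a x \<otimes> b x) ys = cw G u a ys \<otimes> cw G u b ys"
    using Cons by auto
  have y: "u y \<in> carrier G" "a y \<in> carrier G" "b y \<in> carrier G" "central G (comm G (u y) (b y))"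
    using Cons.prems by auto
  have ca: "cw G u a ys \<in> carrier G" "cw G u b ys \<in> carrier G"
    using Cons.prems by auto
  have cb: "central G (cw G u b ys)"
    using Cons.prems by (auto intro: cw_central)
  have "cw G u (\<lambda>x. a x \<otimes> b x) (y # ys)
        = comm G (u y) (a y) \<otimes> (comm G (u y) (b y) \<otimes> cw G u a ys) \<otimes> cw G u b ys"
    using y ca by (simp add: IH comm_mult_right m_assoc)
  also have "comm G (u y) (b y) \<otimes> cw G u a ys = cw G u a ys \<otimes> comm G (u y) (b y)"
    using y ca unfolding central_def by metis
  finally show ?case using y ca by (simp add: m_assoc)
qed

lemma cw_ones:
  "(\<And>x. x \<in> set xs \<Longrightarrow> u x \<in> carrier G \<and> v x = \<one>) \<Longrightarrow> cw G u v xs = \<one>"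
  by (induction xs) auto

lemma cw_single:
  assumes "distinct xs" "y \<in> set xs"
    and "\<And>x. x \<in> set xs \<Longrightarrow> u x \<in> carrier G \<and> v x \<in> carrier G"
    and "\<And>x. x \<noteq> y \<Longrightarrow> v x = \<one>"
  shows "cw G u v xs = comm G (u y) (v y)"
  using assms
proof (induction xs)
  case Nil then show ?case by simp
next
  case (Cons z zs)
  show ?case
  proof (cases "z = y")
    case True
    have "\<And>x. x \<in> set zs \<Longrightarrow> u x \<in> carrier G \<and> v x = \<one>"
    proof -
      fix x assume "x \<in> set zs"
      moreover have "y \<notin> set zs" using True Cons.prems(1) by simp
      ultimately show "u x \<in> carrier G \<and> v x = \<one>" using Cons.prems(3,4) by force
    qed
    then have "cw G u v zs = \<one>" by (rule cw_ones)
    then show ?thesis using True Cons.prems by simp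
  next
    case False
    then show ?thesis using Cons by simp
  qed
qed

lemma cw_in_normal:
  assumes "K \<lhd> G" "\<And>x. x \<in> set xs \<Longrightarrow> u x \<in> K \<and> v x \<in> carrier G"
  shows "cw G u v xs \<in> K"
  using assms(2)
proof (induction xs)
  case Nil then show ?case using assms(1) by (simp add: normal_def subgroup.one_closed)
next
  case (Cons y ys)
  have uy: "u y \<in> K" "v y \<in> carrier G" using Cons.prems by auto
  have Kc: "K \<subseteq> carrier G" using subgroup.subset[OF normal_imp_subgroup[OF assms(1)]] .
  have "v y \<otimes> inv (u y) \<otimes> inv (v y) \<in> K"
  proof -
    have "inv (u y) \<in> K" using subgroup.m_inv_closed[OF normal_imp_subgroup[OF assms(1)] uy(1)] .
    from normal.inv_op_closed2[OF assms(1) uy(2) this] show ?thesis .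
  qed
  then have "comm G (u y) (v y) \<in> K"
  proof -
    have eq: "comm G (u y) (v y) = u y \<otimes> (v y \<otimes> inv (u y) \<otimes> inv (v y))"
      using uy Kc unfolding comm_def by (simp add: m_assoc subsetD)
    show ?thesis unfolding eq using uy \<open>v y \<otimes> inv (u y) \<otimes> inv (v y) \<in> K\<close> assms(1)
      by (simp add: normal_imp_subgroup subgroup.m_closed)
  qed
  moreover have "cw G u v ys \<in> K" using Cons.IH Cons.prems by simp
  ultimately show ?case using assms(1) normal_imp_subgroup subgroup.m_closed by fastforce
qed

end

lemma cw_cong: "(\<And>x. x \<in> set xs \<Longrightarrow> v x = v' x) \<Longrightarrow> (\<And>x. x \<in> set xs \<Longrightarrow> u x = u' x) \<Longrightarrow> cw G u v xs = cw G u' v' xs"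
  by (induction xs) auto

lemma hom_comm:
  assumes "group G" "group G'" "h \<in> hom G G'" "x \<in> carrier G" "y \<in> carrier G"
  shows "h (comm G x y) = comm G' (h x) (h y)"
proof -
  interpret group_hom G G' h using assms by (simp add: group_hom_def group_hom_axioms_def)
  show ?thesis using assms(4,5) by (simp add: comm_def)
qed

lemma hom_cw:
  assumes "group G" "group G'" "h \<in> hom G G'"
    "\<And>x. x \<in> set xs \<Longrightarrow> u x \<in> carrier G \<and> v x \<in> carrier G"
  shows "h (cw G u v xs) = cw G' (\<lambda>x. h (u x)) (\<lambda>x. h (v x)) xs"
proof -
  interpret group_hom G G' h using assms by (simp add: group_hom_def group_hom_axioms_def)
  show ?thesis using assms(4)
  proof (induction xs)
    case Nil then show ?case by simp
  next
    case (Cons y ys)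
    have "h (cw G u v (y # ys)) = h (comm G (u y) (v y)) \<otimes>\<^bsub>G'\<^esub> h (cw G u v ys)"
      using Cons.prems by simp
    also have "\<dots> = comm G' (h (u y)) (h (v y)) \<otimes>\<^bsub>G'\<^esub> cw G' (\<lambda>x. h (u x)) (\<lambda>x. h (v x)) ys"
      using Cons hom_comm[OF assms(1-3)] by simp
    finally show ?case by simp
  qed
qed



locale setting = group H for H :: "('a, 'b) monoid_scheme" (structure) +
  fixes Xs :: "'a set" and N :: "nat \<Rightarrow> 'a set" and xs :: "'a list"
  assumes Xs_sub: "Xs \<subseteq> carrier H"
    and nrm: "\<And>i. N i \<lhd> H"
    and dec: "\<And>i. N (Suc i) \<subseteq> N i"
    and ceq: "\<And>i. commutator_subgroup H (carrier H) (N i) = N (Suc i)"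
    and ng: "\<And>i. normally_generated_by (H Mod N i) ((\<lambda>x. N i #>\<^bsub>H\<^esub> x) ` Xs)"
    and xs_set: "set xs = Xs" and xs_dist: "distinct xs"
begin

abbreviation Q :: "nat \<Rightarrow> 'a set monoid" where "Q i \<equiv> H Mod N i"
abbreviation pr :: "nat \<Rightarrow> 'a \<Rightarrow> 'a set" where "pr i x \<equiv> N i #>\<^bsub>H\<^esub> x"

lemma Qgrp: "group (Q i)"
  using normal.factorgroup_is_group[OF nrm] .

lemma pr_hom: "pr i \<in> hom H (Q i)"
  using normal.r_coset_hom_Mod[OF nrm] .

lemma pr_gh: "group_hom H (Q i) (pr i)"
  using pr_hom Qgrp by (simp add: group_hom_def group_hom_axioms_def is_group)

lemma N_sg: "subgroup (N i) H"
  using normal_imp_subgroup[OF nrm] .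

lemma N_sub: "N i \<subseteq> carrier H"
  using subgroup.subset[OF N_sg] .

lemma pr_carrier: "g \<in> carrier H \<Longrightarrow> pr i g \<in> carrier (Q i)"
  by (simp add: FactGroup_def RCOSETS_def) blast

lemma pr_surj: "pr i ` carrier H = carrier (Q i)"
  by (auto simp add: FactGroup_def RCOSETS_def)

lemma pr_mult: "g \<in> carrier H \<Longrightarrow> g' \<in> carrier H \<Longrightarrow> pr i (g \<otimes> g') = pr i g \<otimes>\<^bsub>Q i\<^esub> pr i g'"
  using group_hom.hom_mult[OF pr_gh] by blast

lemma pr_inv: "g \<in> carrier H \<Longrightarrow> pr i (inv g) = inv\<^bsub>Q i\<^esub> pr i g"
  using group_hom.hom_inv[OF pr_gh] by blast

lemma pr_one: "pr i \<one> = \<one>\<^bsub>Q i\<^esub>"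
  using group_hom.hom_one[OF pr_gh] by blast

lemma pr_eq: "g \<in> carrier H \<Longrightarrow> g' \<in> carrier H \<Longrightarrow> pr i g = pr i g' \<longleftrightarrow> g \<otimes> inv g' \<in> N i"
proof
  assume g: "g \<in> carrier H" "g' \<in> carrier H" and e: "pr i g = pr i g'"
  have "g \<in> pr i g'" using e rcos_self[OF g(1) N_sg[of i]] by simp
  then show "g \<otimes> inv g' \<in> N i" using subgroup.rcos_module_imp[OF N_sg is_group g(2)] by blast
next
  assume g: "g \<in> carrier H" "g' \<in> carrier H" and m: "g \<otimes> inv g' \<in> N i"
  have "g \<in> pr i g'" using subgroup.rcos_module_rev[OF N_sg is_group g(2) g(1) m] .
  then show "pr i g = pr i g'" using repr_independence[OF _ g(2) N_sg] by simp
qed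

lemma pr_one_iff: "g \<in> carrier H \<Longrightarrow> pr i g = \<one>\<^bsub>Q i\<^esub> \<longleftrightarrow> g \<in> N i"
  using pr_eq[of g \<one> i] pr_one[of i] by simp

lemma pr_of_mem: "F \<in> carrier (Q i) \<Longrightarrow> w \<in> F \<Longrightarrow> pr i w = F"
proof -
  assume F: "F \<in> carrier (Q i)" and w: "w \<in> F"
  then obtain e where e: "e \<in> carrier H" "F = pr i e" by (auto simp: FactGroup_def RCOSETS_def)
  show "pr i w = F" using repr_independence[OF _ e(1) N_sg] w e by simp
qed

lemma comm_in_next: "g \<in> carrier H \<Longrightarrow> n \<in> N i \<Longrightarrow> comm H g n \<in> N (Suc i)"
  unfolding ceq[symmetric] commutator_subgroup_def comm_def
  by (rule generate.incl) blast

lemma pr_comm: "g \<in> carrier H \<Longrightarrow> n \<in> carrier H \<Longrightarrow> pr i (comm H g n) = comm (Q i) (pr i g) (pr i n)"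
  using hom_comm[OF is_group Qgrp pr_hom] by blast

lemma central_pr: "n \<in> N j \<Longrightarrow> central (Q (Suc j)) (pr (Suc j) n)"
proof -
  assume n: "n \<in> N j"
  have nc: "n \<in> carrier H" using n N_sub by blast
  show ?thesis unfolding central_def
  proof (intro conjI ballI)
    show "pr (Suc j) n \<in> carrier (Q (Suc j))" using pr_carrier nc by blast
    fix q assume "q \<in> carrier (Q (Suc j))"
    then obtain g where g: "g \<in> carrier H" "q = pr (Suc j) g" using pr_surj by blast
    have cc: "comm H g n \<in> carrier H" using g nc by simp
    have "pr (Suc j) (comm H g n) = \<one>\<^bsub>Q (Suc j)\<^esub>"
      using pr_one_iff[OF cc] comm_in_next[OF g(1) n] by blast
    then have "comm (Q (Suc j)) (pr (Suc j) g) (pr (Suc j) n) = \<one>\<^bsub>Q (Suc j)\<^esub>"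
      using pr_comm[OF g(1) nc] by simp
    then show "pr (Suc j) n \<otimes>\<^bsub>Q (Suc j)\<^esub> q = q \<otimes>\<^bsub>Q (Suc j)\<^esub> pr (Suc j) n"
      using group.comm_eq_one_iff[OF Qgrp] g pr_carrier nc by metis
  qed
qed

lemma central_comm_pr:
  "g \<in> carrier H \<Longrightarrow> n \<in> N j \<Longrightarrow> central (Q (Suc (Suc j))) (comm (Q (Suc (Suc j))) (pr (Suc (Suc j)) g) (pr (Suc (Suc j)) n))"
  using pr_comm central_pr comm_in_next N_sub by (metis subsetD)

end



context setting
begin

lemma xs_carrier: "x \<in> set xs \<Longrightarrow> x \<in> carrier H"
  using Xs_sub xs_set by blast

lemma cw_pr_mult:
  assumes a: "\<And>x. a x \<in> carrier H" and b: "\<And>x. b x \<in> N k"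
  shows "pr (Suc (Suc k)) (cw H (\<lambda>x. x) (\<lambda>x. a x \<otimes> b x) xs)
       = pr (Suc (Suc k)) (cw H (\<lambda>x. x) a xs) \<otimes>\<^bsub>Q (Suc (Suc k))\<^esub> pr (Suc (Suc k)) (cw H (\<lambda>x. x) b xs)"
proof -
  let ?k = "Suc (Suc k)"
  have bc: "\<And>x. b x \<in> carrier H" using b N_sub by blast
  have "pr ?k (cw H (\<lambda>x. x) (\<lambda>x. a x \<otimes> b x) xs) = cw (Q ?k) (\<lambda>x. pr ?k x) (\<lambda>x. pr ?k (a x \<otimes> b x)) xs"
    using hom_cw[OF is_group Qgrp pr_hom, of xs "\<lambda>x. x" "\<lambda>x. a x \<otimes> b x"] xs_carrier a bc by simp
  also have "\<dots> = cw (Q ?k) (\<lambda>x. pr ?k x) (\<lambda>x. pr ?k (a x) \<otimes>\<^bsub>Q ?k\<^esub> pr ?k (b x)) xs"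
    by (rule cw_cong) (simp_all add: pr_mult a bc)
  also have "\<dots> = cw (Q ?k) (\<lambda>x. pr ?k x) (\<lambda>x. pr ?k (a x)) xs \<otimes>\<^bsub>Q ?k\<^esub> cw (Q ?k) (\<lambda>x. pr ?k x) (\<lambda>x. pr ?k (b x)) xs"
    by (rule group.cw_mult[OF Qgrp]) (auto simp: pr_carrier xs_carrier a bc central_comm_pr b)
  also have "\<dots> = pr ?k (cw H (\<lambda>x. x) a xs) \<otimes>\<^bsub>Q ?k\<^esub> pr ?k (cw H (\<lambda>x. x) b xs)"
    using hom_cw[OF is_group Qgrp pr_hom, of xs "\<lambda>x. x" a] hom_cw[OF is_group Qgrp pr_hom, of xs "\<lambda>x. x" b]
      xs_carrier a bc by simp
  finally show ?thesis .
qed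

definition SQ :: "nat \<Rightarrow> 'a set set" where
  "SQ k = {q. \<exists>b. (\<forall>x. b x \<in> N k) \<and> q = pr (Suc (Suc k)) (cw H (\<lambda>x. x) b xs)}"

lemma SQ_carrier: "q \<in> SQ k \<Longrightarrow> q \<in> carrier (Q (Suc (Suc k)))"
proof -
  assume "q \<in> SQ k"
  then obtain b where b: "\<And>x. b x \<in> N k" and q: "q = pr (Suc (Suc k)) (cw H (\<lambda>x. x) b xs)"
    unfolding SQ_def by blast
  have "cw H (\<lambda>x. x) b xs \<in> carrier H"
    by (rule cw_closed) (use b N_sub xs_carrier in blast)
  then show ?thesis using q pr_carrier by simp
qed

lemma SQ_one: "\<one>\<^bsub>Q (Suc (Suc k))\<^esub> \<in> SQ k"
proof -
  have "cw H (\<lambda>x. x) (\<lambda>x. \<one>) xs = \<one>" by (rule cw_ones) (simp add: xs_carrier)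
  moreover have "\<one> \<in> N k" using subgroup.one_closed[OF N_sg] .
  ultimately show ?thesis unfolding SQ_def using pr_one by (intro CollectI exI[of _ "\<lambda>x. \<one>"]) simp
qed

lemma SQ_mult: "q1 \<in> SQ k \<Longrightarrow> q2 \<in> SQ k \<Longrightarrow> q1 \<otimes>\<^bsub>Q (Suc (Suc k))\<^esub> q2 \<in> SQ k"
proof -
  assume "q1 \<in> SQ k" "q2 \<in> SQ k"
  then obtain b1 b2 where b: "\<And>x. b1 x \<in> N k" "\<And>x. b2 x \<in> N k"
    and q: "q1 = pr (Suc (Suc k)) (cw H (\<lambda>x. x) b1 xs)" "q2 = pr (Suc (Suc k)) (cw H (\<lambda>x. x) b2 xs)"
    unfolding SQ_def by blast
  have m: "\<And>x. b1 x \<otimes> b2 x \<in> N k" by (intro subgroup.m_closed[OF N_sg] b)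
  have e: "q1 \<otimes>\<^bsub>Q (Suc (Suc k))\<^esub> q2 = pr (Suc (Suc k)) (cw H (\<lambda>x. x) (\<lambda>x. b1 x \<otimes> b2 x) xs)"
    using cw_pr_mult[of b1 b2 k] b N_sub q by blast
  have "\<exists>b. (\<forall>x. b x \<in> N k) \<and> q1 \<otimes>\<^bsub>Q (Suc (Suc k))\<^esub> q2 = pr (Suc (Suc k)) (cw H (\<lambda>x. x) b xs)"
    by (rule exI[of _ "\<lambda>x. b1 x \<otimes> b2 x"]) (use m e in simp)
  then show ?thesis unfolding SQ_def by simp
qed

lemma SQ_inv: "q \<in> SQ k \<Longrightarrow> inv\<^bsub>Q (Suc (Suc k))\<^esub> q \<in> SQ k"
proof -
  let ?k = "Suc (Suc k)"
  assume qS: "q \<in> SQ k"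
  then obtain b where b: "\<And>x. b x \<in> N k" and q: "q = pr ?k (cw H (\<lambda>x. x) b xs)"
    unfolding SQ_def by blast
  have bc: "\<And>x. b x \<in> carrier H" using b N_sub by blast
  have b': "\<And>x. inv (b x) \<in> N k" by (intro subgroup.m_inv_closed[OF N_sg] b)
  let ?q' = "pr ?k (cw H (\<lambda>x. x) (\<lambda>x. inv (b x)) xs)"
  have "pr ?k (cw H (\<lambda>x. x) (\<lambda>x. b x \<otimes> inv (b x)) xs) = q \<otimes>\<^bsub>Q ?k\<^esub> ?q'"
    using cw_pr_mult[of b "\<lambda>x. inv (b x)" k] bc b' q by blast
  moreover have "cw H (\<lambda>x. x) (\<lambda>x. b x \<otimes> inv (b x)) xs = \<one>"
    by (rule cw_ones) (simp add: xs_carrier bc)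
  ultimately have e: "q \<otimes>\<^bsub>Q ?k\<^esub> ?q' = \<one>\<^bsub>Q ?k\<^esub>" using pr_one by simp
  have "cw H (\<lambda>x. x) (\<lambda>x. inv (b x)) xs \<in> carrier H"
    by (rule cw_closed) (simp add: xs_carrier bc)
  then have qc: "q \<in> carrier (Q ?k)" "?q' \<in> carrier (Q ?k)"
    using SQ_carrier[OF qS] pr_carrier by auto
  have "?q' \<otimes>\<^bsub>Q ?k\<^esub> q = \<one>\<^bsub>Q ?k\<^esub>" using group.inv_comm[OF Qgrp e qc] .
  then have "inv\<^bsub>Q ?k\<^esub> q = ?q'" using group.inv_equality[OF Qgrp _ qc] by blast
  then have "\<exists>b. (\<forall>x. b x \<in> N k) \<and> inv\<^bsub>Q ?k\<^esub> q = pr ?k (cw H (\<lambda>x. x) b xs)"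
    by (intro exI[of _ "\<lambda>x. inv (b x)"]) (use b' in simp)
  then show ?thesis unfolding SQ_def by simp
qed

definition T :: "nat \<Rightarrow> 'a set" where
  "T k = {g \<in> carrier H. \<forall>n\<in>N k. pr (Suc (Suc k)) (comm H g n) \<in> SQ k}"

lemma T_mult: "g1 \<in> T k \<Longrightarrow> g2 \<in> T k \<Longrightarrow> g1 \<otimes> g2 \<in> T k"
proof -
  let ?k = "Suc (Suc k)"
  assume g: "g1 \<in> T k" "g2 \<in> T k"
  have gc: "g1 \<in> carrier H" "g2 \<in> carrier H" using g T_def by auto
  show ?thesis unfolding T_def
  proof (intro CollectI conjI ballI)
    show "g1 \<otimes> g2 \<in> carrier H" using gc by simp
    fix n assume n: "n \<in> N k"
    have nc: "n \<in> carrier H" using n N_sub by blast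
    have "pr ?k (comm H (g1 \<otimes> g2) n) = comm (Q ?k) (pr ?k g1 \<otimes>\<^bsub>Q ?k\<^esub> pr ?k g2) (pr ?k n)"
      using pr_comm gc nc pr_mult by simp
    also have "\<dots> = comm (Q ?k) (pr ?k g2) (pr ?k n) \<otimes>\<^bsub>Q ?k\<^esub> comm (Q ?k) (pr ?k g1) (pr ?k n)"
      by (rule group.comm_mult_left[OF Qgrp]) (auto simp: pr_carrier gc nc central_comm_pr n)
    also have "\<dots> = pr ?k (comm H g2 n) \<otimes>\<^bsub>Q ?k\<^esub> pr ?k (comm H g1 n)"
      using pr_comm gc nc by simp
    finally show "pr ?k (comm H (g1 \<otimes> g2) n) \<in> SQ k"
      using SQ_mult g n T_def by simp
  qed
qed

lemma T_inv: "g \<in> T k \<Longrightarrow> inv g \<in> T k"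
proof -
  let ?k = "Suc (Suc k)"
  assume g: "g \<in> T k"
  have gc: "g \<in> carrier H" using g T_def by auto
  show ?thesis unfolding T_def
  proof (intro CollectI conjI ballI)
    show "inv g \<in> carrier H" using gc by simp
    fix n assume n: "n \<in> N k"
    have nc: "n \<in> carrier H" using n N_sub by blast
    let ?c = "comm (Q ?k) (inv\<^bsub>Q ?k\<^esub> pr ?k g) (pr ?k n)"
    let ?d = "comm (Q ?k) (pr ?k g) (pr ?k n)"
    have pc: "pr ?k g \<in> carrier (Q ?k)" "pr ?k n \<in> carrier (Q ?k)" using pr_carrier gc nc by auto
    have "comm (Q ?k) (inv\<^bsub>Q ?k\<^esub> pr ?k g \<otimes>\<^bsub>Q ?k\<^esub> pr ?k g) (pr ?k n) = ?d \<otimes>\<^bsub>Q ?k\<^esub> ?c"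
      by (rule group.comm_mult_left[OF Qgrp]) (auto simp: pc group.inv_closed[OF Qgrp] central_comm_pr gc n)
    moreover have "inv\<^bsub>Q ?k\<^esub> pr ?k g \<otimes>\<^bsub>Q ?k\<^esub> pr ?k g = \<one>\<^bsub>Q ?k\<^esub>" using group.l_inv[OF Qgrp pc(1)] .
    ultimately have e: "?d \<otimes>\<^bsub>Q ?k\<^esub> ?c = \<one>\<^bsub>Q ?k\<^esub>" using group.comm_one_left[OF Qgrp pc(2)] by simp
    have cc: "?d \<in> carrier (Q ?k)" "?c \<in> carrier (Q ?k)"
      using pc group.comm_closed[OF Qgrp] group.inv_closed[OF Qgrp] by auto
    have "?c \<otimes>\<^bsub>Q ?k\<^esub> ?d = \<one>\<^bsub>Q ?k\<^esub>" using group.inv_comm[OF Qgrp e cc] .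
    then have i1: "inv\<^bsub>Q ?k\<^esub> ?d = ?c" using group.inv_equality[OF Qgrp _ cc] by blast
    have i2: "pr ?k (comm H (inv g) n) = ?c" using pr_comm pr_inv gc nc by simp
    have i3: "?d = pr ?k (comm H g n)" using pr_comm gc nc by simp
    have s: "pr ?k (comm H g n) \<in> SQ k" using g n unfolding T_def by blast
    have "pr ?k (comm H (inv g) n) = inv\<^bsub>Q ?k\<^esub> ?d" using i1 i2 by simp
    also have "\<dots> = inv\<^bsub>Q ?k\<^esub> pr ?k (comm H g n)" using i3 by simp
    finally show "pr ?k (comm H (inv g) n) \<in> SQ k"
      using SQ_inv[OF s] by simp
  qed
qed

lemma T_conj: "g \<in> carrier H \<Longrightarrow> t \<in> T k \<Longrightarrow> g \<otimes> t \<otimes> inv g \<in> T k"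
proof -
  let ?k = "Suc (Suc k)"
  assume gc: "g \<in> carrier H" and t: "t \<in> T k"
  have tc: "t \<in> carrier H" using t T_def by auto
  show ?thesis unfolding T_def
  proof (intro CollectI conjI ballI)
    show "g \<otimes> t \<otimes> inv g \<in> carrier H" using gc tc by simp
    fix n assume n: "n \<in> N k"
    have nc: "n \<in> carrier H" using n N_sub by blast
    have n': "inv g \<otimes> n \<otimes> g \<in> N k" using normal.inv_op_closed1[OF nrm gc n] .
    have n'c: "inv g \<otimes> n \<otimes> g \<in> carrier H" using gc nc by simp
    have pc: "pr ?k g \<in> carrier (Q ?k)" "pr ?k n \<in> carrier (Q ?k)" "pr ?k t \<in> carrier (Q ?k)"
      using pr_carrier gc nc tc by auto
    have e1: "pr ?k (inv g \<otimes> n \<otimes> g) = inv\<^bsub>Q ?k\<^esub> pr ?k g \<otimes>\<^bsub>Q ?k\<^esub> pr ?k n \<otimes>\<^bsub>Q ?k\<^esub> pr ?k g"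
      using pr_mult pr_inv gc nc by simp
    have "pr ?k (comm H (g \<otimes> t \<otimes> inv g) n) = comm (Q ?k) (pr ?k g \<otimes>\<^bsub>Q ?k\<^esub> pr ?k t \<otimes>\<^bsub>Q ?k\<^esub> inv\<^bsub>Q ?k\<^esub> pr ?k g) (pr ?k n)"
      using pr_comm pr_mult pr_inv gc nc tc by simp
    also have "\<dots> = comm (Q ?k) (pr ?k t) (inv\<^bsub>Q ?k\<^esub> pr ?k g \<otimes>\<^bsub>Q ?k\<^esub> pr ?k n \<otimes>\<^bsub>Q ?k\<^esub> pr ?k g)"
      by (rule group.comm_conj[OF Qgrp pc(1) pc(3) pc(2)])
        (metis e1 central_comm_pr[OF tc n'])
    also have "\<dots> = pr ?k (comm H t (inv g \<otimes> n \<otimes> g))"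
      using pr_comm[OF tc n'c] e1 by simp
    finally show "pr ?k (comm H (g \<otimes> t \<otimes> inv g) n) \<in> SQ k"
      using t n' T_def by simp
  qed
qed

lemma T_Xs: "x \<in> Xs \<Longrightarrow> x \<in> T k"
proof -
  assume x: "x \<in> Xs"
  have xc: "x \<in> carrier H" using x Xs_sub by blast
  show ?thesis unfolding T_def
  proof (intro CollectI conjI ballI)
    show "x \<in> carrier H" by (rule xc)
    fix n assume n: "n \<in> N k"
    have nc: "n \<in> carrier H" using n N_sub by blast
    let ?b = "\<lambda>y. if y = x then n else \<one>"
    have "cw H (\<lambda>y. y) ?b xs = comm H x (?b x)"
      by (rule cw_single) (use xs_dist x xs_set xs_carrier nc in auto)
    moreover have "\<forall>y. ?b y \<in> N k" using n N_sg subgroup.one_closed by auto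
    ultimately show "pr (Suc (Suc k)) (comm H x n) \<in> SQ k"
      unfolding SQ_def by (intro CollectI exI[of _ ?b]) simp
  qed
qed

lemma T_N: "m \<in> N (Suc k) \<Longrightarrow> m \<in> T k"
proof -
  let ?k = "Suc (Suc k)"
  assume m: "m \<in> N (Suc k)"
  have mc: "m \<in> carrier H" using m N_sub by blast
  show ?thesis unfolding T_def
  proof (intro CollectI conjI ballI)
    show "m \<in> carrier H" by (rule mc)
    fix n assume n: "n \<in> N k"
    have nc: "n \<in> carrier H" using n N_sub by blast
    have "pr ?k (comm H m n) = comm (Q ?k) (pr ?k m) (pr ?k n)" using pr_comm mc nc by simp
    also have "\<dots> = \<one>\<^bsub>Q ?k\<^esub>"
      using group.comm_central_left[OF Qgrp central_pr[OF m]] pr_carrier nc by blast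
    finally show "pr ?k (comm H m n) \<in> SQ k" using SQ_one by simp
  qed
qed

lemma T_normal: "T k \<lhd> H"
proof -
  have "\<one> \<in> T k" using T_N subgroup.one_closed[OF N_sg] by blast
  then have "subgroup (T k) H"
  proof (intro subgroupI)
    show "T k \<subseteq> carrier H" unfolding T_def by blast
  next
    show "\<one> \<in> T k \<Longrightarrow> T k \<noteq> {}" by blast
  next
    fix a assume "a \<in> T k" then show "inv a \<in> T k" by (rule T_inv)
  next
    fix a b assume "a \<in> T k" "b \<in> T k" then show "a \<otimes> b \<in> T k" by (rule T_mult)
  qed
  then show ?thesis using normal_inv_iff T_conj by blast
qed

lemma T_all: "T k = carrier H"
proof
  show "T k \<subseteq> carrier H" unfolding T_def by blast
  have nc: "normal_closure (Q (Suc k)) (pr (Suc k) ` Xs) = carrier (Q (Suc k))"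
    using ng[of "Suc k"] unfolding normally_generated_by_def by blast
  have "pr (Suc k) ` T k \<lhd> Q (Suc k)"
    using normal.surj_hom_normal_subgroup[OF T_normal pr_gh pr_surj] .
  moreover have "pr (Suc k) ` Xs \<subseteq> pr (Suc k) ` T k" using T_Xs by blast
  ultimately have sub: "carrier (Q (Suc k)) \<subseteq> pr (Suc k) ` T k"
    using nc unfolding normal_closure_def by blast
  show "carrier H \<subseteq> T k"
  proof
    fix g assume g: "g \<in> carrier H"
    then obtain t where t: "t \<in> T k" "pr (Suc k) g = pr (Suc k) t"
      using sub pr_carrier by blast
    have tc: "t \<in> carrier H" using t T_def by auto
    have "g \<otimes> inv t \<in> N (Suc k)" using pr_eq g tc t by blast
    then have "g \<otimes> inv t \<in> T k" by (rule T_N)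
    then have "g \<otimes> inv t \<otimes> t \<in> T k" using T_mult t by blast
    then show "g \<in> T k" using g tc by (simp add: m_assoc)
  qed
qed

lemma L1: "n \<in> N (Suc k) \<Longrightarrow> pr (Suc (Suc k)) n \<in> SQ k"
proof -
  let ?k = "Suc (Suc k)"
  assume "n \<in> N (Suc k)"
  then have "n \<in> generate H (\<Union>a\<in>carrier H. \<Union>b\<in>N k. {a \<otimes> b \<otimes> inv a \<otimes> inv b})"
    using ceq[of k] unfolding commutator_subgroup_def by simp
  then have "n \<in> carrier H \<and> pr ?k n \<in> SQ k"
  proof (induction rule: generate.induct)
    case one
    then show ?case using pr_one SQ_one by simp
  next
    case (incl h)
    then obtain a b where ab: "a \<in> carrier H" "b \<in> N k" "h = comm H a b"
      unfolding comm_def by blast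
    have bc: "b \<in> carrier H" using ab(2) N_sub by blast
    have "a \<in> T k" using T_all ab(1) by simp
    then have "pr ?k (comm H a b) \<in> SQ k" using ab(2) unfolding T_def by blast
    then show ?case using ab(1,3) bc by simp
  next
    case (inv h)
    then obtain a b where ab: "a \<in> carrier H" "b \<in> N k" "h = comm H a b"
      unfolding comm_def by blast
    have "b \<in> carrier H" using ab(2) N_sub by blast
    then have hc: "h \<in> carrier H" using ab(1,3) by simp
    have "a \<in> T k" using T_all ab(1) by simp
    then have "pr ?k h \<in> SQ k" using ab(2,3) unfolding T_def by blast
    then show ?case using hc pr_inv SQ_inv by simp
  next
    case (eng h1 h2)
    then show ?case using pr_mult SQ_mult by simp
  qed
  then show ?thesis by blast
qed

end



context setting
begin

abbreviation Gm where "Gm \<equiv> inv_limit_quot H N"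
abbreviation hm where "hm \<equiv> inv_limit_map H N"

lemma Qmon: "monoid (Q i)"
  using group.is_monoid[OF Qgrp] .

lemma Gm_carrier: "f \<in> carrier Gm \<longleftrightarrow> (\<forall>i. f i \<in> carrier (Q i)) \<and> (\<forall>i. f (Suc i) \<subseteq> f i)"
  by (simp add: inv_limit_quot_def)

lemma Gm_mult: "f \<otimes>\<^bsub>Gm\<^esub> g = (\<lambda>i. f i \<otimes>\<^bsub>Q i\<^esub> g i)"
  by (simp add: inv_limit_quot_def)

lemma Gm_one: "\<one>\<^bsub>Gm\<^esub> = (\<lambda>i. \<one>\<^bsub>Q i\<^esub>)"
  by (simp add: inv_limit_quot_def)

lemma hm_app: "hm g i = pr i g"
  by (simp add: inv_limit_map_def)

lemma setmult_mono: "A \<subseteq> A' \<Longrightarrow> B \<subseteq> B' \<Longrightarrow> A <#>\<^bsub>H\<^esub> B \<subseteq> A' <#>\<^bsub>H\<^esub> B'"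
  by (auto simp: set_mult_def)

lemma setinv_mono: "A \<subseteq> A' \<Longrightarrow> set_inv\<^bsub>H\<^esub> A \<subseteq> set_inv\<^bsub>H\<^esub> A'"
  by (auto simp: SET_INV_def)

lemma Gm_grp: "group Gm"
proof (rule groupI)
  fix x y assume x: "x \<in> carrier Gm" and y: "y \<in> carrier Gm"
  show "x \<otimes>\<^bsub>Gm\<^esub> y \<in> carrier Gm"
    unfolding Gm_carrier Gm_mult
  proof (intro conjI allI)
    fix i
    show "x i \<otimes>\<^bsub>Q i\<^esub> y i \<in> carrier (Q i)"
      using x y Gm_carrier monoid.m_closed[OF Qmon] by blast
    show "x (Suc i) \<otimes>\<^bsub>Q (Suc i)\<^esub> y (Suc i) \<subseteq> x i \<otimes>\<^bsub>Q i\<^esub> y i"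
      using x y Gm_carrier setmult_mono by simp
  qed
next
  show "\<one>\<^bsub>Gm\<^esub> \<in> carrier Gm"
    unfolding Gm_carrier Gm_one using monoid.one_closed[OF Qmon] dec by simp
next
  fix x y z assume xyz: "x \<in> carrier Gm" "y \<in> carrier Gm" "z \<in> carrier Gm"
  show "x \<otimes>\<^bsub>Gm\<^esub> y \<otimes>\<^bsub>Gm\<^esub> z = x \<otimes>\<^bsub>Gm\<^esub> (y \<otimes>\<^bsub>Gm\<^esub> z)"
    unfolding Gm_mult
  proof (rule ext)
    fix i
    have "x i \<in> carrier (Q i)" "y i \<in> carrier (Q i)" "z i \<in> carrier (Q i)"
      using xyz unfolding Gm_carrier by blast+
    then show "x i \<otimes>\<^bsub>Q i\<^esub> y i \<otimes>\<^bsub>Q i\<^esub> z i = x i \<otimes>\<^bsub>Q i\<^esub> (y i \<otimes>\<^bsub>Q i\<^esub> z i)"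
      by (rule monoid.m_assoc[OF Qmon])
  qed
next
  fix x assume x: "x \<in> carrier Gm"
  show "\<one>\<^bsub>Gm\<^esub> \<otimes>\<^bsub>Gm\<^esub> x = x"
    unfolding Gm_mult Gm_one
  proof (rule ext)
    fix i
    have "x i \<in> carrier (Q i)" using x unfolding Gm_carrier by blast
    then show "\<one>\<^bsub>Q i\<^esub> \<otimes>\<^bsub>Q i\<^esub> x i = x i" by (rule monoid.l_one[OF Qmon])
  qed
next
  fix x assume x: "x \<in> carrier Gm"
  let ?y = "\<lambda>i. inv\<^bsub>Q i\<^esub> x i"
  have "?y \<in> carrier Gm"
    unfolding Gm_carrier
  proof (intro conjI allI)
    fix i
    show "?y i \<in> carrier (Q i)" using x Gm_carrier group.inv_closed[OF Qgrp] by blast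
    have "?y (Suc i) = set_inv\<^bsub>H\<^esub> (x (Suc i))" "?y i = set_inv\<^bsub>H\<^esub> (x i)"
      using x Gm_carrier normal.inv_FactGroup[OF nrm] by auto
    then show "?y (Suc i) \<subseteq> ?y i" using x Gm_carrier setinv_mono by simp
  qed
  moreover have "?y \<otimes>\<^bsub>Gm\<^esub> x = \<one>\<^bsub>Gm\<^esub>"
    unfolding Gm_mult Gm_one
  proof (rule ext)
    fix i
    have "x i \<in> carrier (Q i)" using x unfolding Gm_carrier by blast
    then show "inv\<^bsub>Q i\<^esub> x i \<otimes>\<^bsub>Q i\<^esub> x i = \<one>\<^bsub>Q i\<^esub>" by (rule group.l_inv[OF Qgrp])
  qed
  ultimately show "\<exists>y\<in>carrier Gm. y \<otimes>\<^bsub>Gm\<^esub> x = \<one>\<^bsub>Gm\<^esub>" by blast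
qed

lemma proj_hom: "(\<lambda>f. f i) \<in> hom Gm (Q i)"
  unfolding hom_def using Gm_carrier Gm_mult by auto

lemma proj_gh: "group_hom Gm (Q i) (\<lambda>f. f i)"
  using proj_hom Gm_grp Qgrp by (simp add: group_hom_def group_hom_axioms_def)

lemma pr_mono: "pr (Suc i) g \<subseteq> pr i g"
  unfolding r_coset_def using dec by blast

lemma hm_hom: "hm \<in> hom H Gm"
proof -
  have "\<And>g. g \<in> carrier H \<Longrightarrow> hm g \<in> carrier Gm"
    unfolding Gm_carrier hm_app using pr_carrier pr_mono by auto
  moreover have "\<And>g g'. g \<in> carrier H \<Longrightarrow> g' \<in> carrier H \<Longrightarrow> hm (g \<otimes> g') = hm g \<otimes>\<^bsub>Gm\<^esub> hm g'"
    unfolding Gm_mult using pr_mult by (auto simp: inv_limit_map_def)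
  ultimately show ?thesis unfolding hom_def by auto
qed

lemma hm_gh: "group_hom H Gm hm"
  using hm_hom Gm_grp by (simp add: group_hom_def group_hom_axioms_def is_group)

lemma construct:
  assumes d: "\<delta> \<in> carrier Gm" and d1: "\<delta> (Suc 0) = N (Suc 0)"
  shows "\<exists>c. (\<forall>x. c x \<in> carrier Gm) \<and> \<delta> = cw Gm hm c xs"
proof -
  define P where "P k (A :: 'a \<Rightarrow> 'a) \<longleftrightarrow> (\<forall>x. A x \<in> carrier H) \<and> pr (Suc k) (cw H (\<lambda>x. x) A xs) = \<delta> (Suc k)" for k A
  define R where "R k (A :: 'a \<Rightarrow> 'a) (B :: 'a \<Rightarrow> 'a) \<longleftrightarrow> (\<forall>x. inv (A x) \<otimes> B x \<in> N k)" for k A B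
  have dc: "\<And>i. \<delta> i \<in> carrier (Q i)" "\<And>i. \<delta> (Suc i) \<subseteq> \<delta> i" using d Gm_carrier by auto
  have "cw H (\<lambda>x. x) (\<lambda>x. \<one>) xs = \<one>" by (rule cw_ones) (simp add: xs_carrier)
  then have P0: "P 0 (\<lambda>x. \<one>)" unfolding P_def using pr_one[of "Suc 0"] d1 by simp
  have step: "\<exists>B. P (Suc k) B \<and> R k A B" if PA: "P k A" for k A
  proof -
    let ?k = "Suc (Suc k)"
    let ?W = "cw H (\<lambda>x. x) A xs"
    have Ac: "\<And>x. A x \<in> carrier H" using PA P_def by auto
    have Wc: "?W \<in> carrier H" using Ac xs_carrier by simp
    obtain d where dH: "d \<in> carrier H" and dd: "\<delta> ?k = pr ?k d"
      using dc(1)[of ?k] pr_surj by (metis imageE)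
    have "d \<in> \<delta> (Suc k)" using rcos_self[OF dH N_sg] dd dc(2)[of "Suc k"] by blast
    then have "pr (Suc k) d = pr (Suc k) ?W" using pr_of_mem[OF dc(1)] PA P_def by simp
    then have "d \<otimes> inv ?W \<in> N (Suc k)" using pr_eq dH Wc by blast
    then have "inv ?W \<otimes> (d \<otimes> inv ?W) \<otimes> ?W \<in> N (Suc k)"
      using normal.inv_op_closed1[OF nrm Wc] by blast
    then have nN: "inv ?W \<otimes> d \<in> N (Suc k)" using dH Wc by (simp add: m_assoc)
    obtain b where b: "\<And>x. b x \<in> N k" and pb: "pr ?k (inv ?W \<otimes> d) = pr ?k (cw H (\<lambda>x. x) b xs)"
      using L1[OF nN] unfolding SQ_def by blast
    have bc: "\<And>x. b x \<in> carrier H" using b N_sub by blast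
    have "pr ?k (cw H (\<lambda>x. x) (\<lambda>x. A x \<otimes> b x) xs) = pr ?k ?W \<otimes>\<^bsub>Q ?k\<^esub> pr ?k (inv ?W \<otimes> d)"
      using cw_pr_mult[OF Ac b] pb by simp
    also have "\<dots> = pr ?k (?W \<otimes> (inv ?W \<otimes> d))" by (rule pr_mult[symmetric]) (use Wc dH in auto)
    also have "\<dots> = \<delta> ?k" using dd Wc dH by simp
    finally have "P (Suc k) (\<lambda>x. A x \<otimes> b x)" unfolding P_def using Ac bc by simp
    moreover have "R k A (\<lambda>x. A x \<otimes> b x)" unfolding R_def using Ac bc b by (simp add: m_assoc[symmetric])
    ultimately show ?thesis by blast
  qed
  obtain A where A: "\<And>n. P n (A n) \<and> R n (A n) (A (Suc n))"
    using dependent_nat_choice[of P R] P0 step by blast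
  have Ac: "\<And>i x. A i x \<in> carrier H" using A P_def by auto
  define c where "c x = (\<lambda>i. pr i (A i x))" for x
  have cG: "c x \<in> carrier Gm" for x
    unfolding Gm_carrier
  proof (intro conjI allI)
    fix i
    show "c x i \<in> carrier (Q i)" unfolding c_def using pr_carrier Ac by blast
    have "inv (A i x) \<otimes> A (Suc i) x \<in> N i" using A R_def by blast
    then have "A i x \<otimes> (inv (A i x) \<otimes> A (Suc i) x) \<otimes> inv (A i x) \<in> N i"
      using normal.inv_op_closed2[OF nrm Ac] by blast
    then have "A (Suc i) x \<otimes> inv (A i x) \<in> N i" using Ac by simp
    then have e: "pr i (A (Suc i) x) = pr i (A i x)" using pr_eq Ac by blast
    have "pr (Suc i) (A (Suc i) x) \<subseteq> pr i (A (Suc i) x)" by (rule pr_mono)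
    then show "c x (Suc i) \<subseteq> c x i" unfolding c_def using e by simp
  qed
  have hmc: "\<And>x. x \<in> set xs \<Longrightarrow> hm x \<in> carrier Gm"
    using hm_hom xs_carrier unfolding hom_def by auto
  have "\<delta> = cw Gm hm c xs"
  proof (rule ext)
    fix i
    have "cw Gm hm c xs i = cw (Q i) (\<lambda>x. hm x i) (\<lambda>x. c x i) xs"
      using hom_cw[OF Gm_grp Qgrp proj_hom, of xs hm c] hmc cG by simp
    also have "\<dots> = cw (Q i) (\<lambda>x. pr i x) (\<lambda>x. pr i (A i x)) xs"
      by (rule cw_cong) (simp_all add: hm_app c_def)
    also have "\<dots> = pr i (cw H (\<lambda>x. x) (A i) xs)"
      using hom_cw[OF is_group Qgrp pr_hom, of xs "\<lambda>x. x" "A i"] xs_carrier Ac by simp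
    also have "\<dots> = \<delta> i"
    proof -
      let ?W = "cw H (\<lambda>x. x) (A i) xs"
      have Wc: "?W \<in> carrier H" using Ac xs_carrier by simp
      have "pr (Suc i) ?W = \<delta> (Suc i)" using A P_def by blast
      then have "?W \<in> \<delta> i" using rcos_self[OF Wc N_sg] dc(2) by blast
      then show ?thesis using pr_of_mem[OF dc(1)] by blast
    qed
    finally show "\<delta> i = cw Gm hm c xs i" by simp
  qed
  then show ?thesis using cG by blast
qed

lemma main: "normally_generated_by Gm (hm ` Xs)"
proof -
  interpret Gg: group Gm by (rule Gm_grp)
  interpret hg: group_hom H Gm hm by (rule hm_gh)
  have S: "hm ` Xs \<subseteq> carrier Gm" using Xs_sub by auto
  have "normal_closure Gm (hm ` Xs) = carrier Gm"
  proof
    show "normal_closure Gm (hm ` Xs) \<subseteq> carrier Gm"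
      unfolding normal_closure_def using Gg.normal_self S by blast
    show "carrier Gm \<subseteq> normal_closure Gm (hm ` Xs)"
      unfolding normal_closure_def
    proof (intro subsetI InterI)
      fix \<gamma> K assume g: "\<gamma> \<in> carrier Gm" and "K \<in> {N. N \<lhd> Gm \<and> hm ` Xs \<subseteq> N}"
      then have K: "K \<lhd> Gm" "hm ` Xs \<subseteq> K" by auto
      have Ksg: "subgroup K Gm" using normal_imp_subgroup[OF K(1)] .
      define T0 where "T0 = {g \<in> carrier H. hm g \<in> K}"
      have "subgroup T0 H"
      proof (rule subgroupI)
        show "T0 \<subseteq> carrier H" unfolding T0_def by blast
        show "T0 \<noteq> {}" unfolding T0_def using subgroup.one_closed[OF Ksg] by auto
        fix a b assume a: "a \<in> T0" and b: "b \<in> T0"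
        show "inv a \<in> T0" using a unfolding T0_def using subgroup.m_inv_closed[OF Ksg] by auto
        show "a \<otimes> b \<in> T0" using a b unfolding T0_def using subgroup.m_closed[OF Ksg] by auto
      qed
      moreover have "\<forall>x\<in>carrier H. \<forall>h\<in>T0. x \<otimes> h \<otimes> inv x \<in> T0"
        unfolding T0_def using normal.inv_op_closed2[OF K(1)] by auto
      ultimately have T0n: "T0 \<lhd> H" using normal_inv_iff by blast
      have "pr (Suc 0) ` T0 \<lhd> Q (Suc 0)"
        using normal.surj_hom_normal_subgroup[OF T0n pr_gh pr_surj] .
      moreover have "pr (Suc 0) ` Xs \<subseteq> pr (Suc 0) ` T0" using K(2) Xs_sub unfolding T0_def by blast
      moreover have "normal_closure (Q (Suc 0)) (pr (Suc 0) ` Xs) = carrier (Q (Suc 0))"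
        using ng[of "Suc 0"] unfolding normally_generated_by_def by blast
      ultimately have sub: "carrier (Q (Suc 0)) \<subseteq> pr (Suc 0) ` T0"
        unfolding normal_closure_def by blast
      have "\<gamma> (Suc 0) \<in> carrier (Q (Suc 0))" using g Gm_carrier by blast
      then obtain w where w: "w \<in> T0" "\<gamma> (Suc 0) = pr (Suc 0) w" using sub by blast
      have wc: "w \<in> carrier H" "hm w \<in> K" using w T0_def by auto
      have hwc: "hm w \<in> carrier Gm" using wc by simp
      define \<delta> where "\<delta> = inv\<^bsub>Gm\<^esub> hm w \<otimes>\<^bsub>Gm\<^esub> \<gamma>"
      have dc: "\<delta> \<in> carrier Gm" unfolding \<delta>_def using hwc g by simp
      have "\<delta> (Suc 0) = inv\<^bsub>Q (Suc 0)\<^esub> (hm w (Suc 0)) \<otimes>\<^bsub>Q (Suc 0)\<^esub> \<gamma> (Suc 0)"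
        unfolding \<delta>_def using group_hom.hom_mult[OF proj_gh] group_hom.hom_inv[OF proj_gh] hwc g
        by (simp add: Gm_mult)
      also have "\<dots> = \<one>\<^bsub>Q (Suc 0)\<^esub>"
        using w(2) hm_app group.l_inv[OF Qgrp] pr_carrier wc(1) by simp
      finally have d1: "\<delta> (Suc 0) = N (Suc 0)" by simp
      obtain c where c: "\<And>x. c x \<in> carrier Gm" and dcw: "\<delta> = cw Gm hm c xs"
        using construct[OF dc d1] by blast
      have "\<delta> \<in> K" unfolding dcw
        by (rule Gg.cw_in_normal[OF K(1)]) (use K(2) xs_set c in auto)
      moreover have "\<gamma> = hm w \<otimes>\<^bsub>Gm\<^esub> \<delta>" unfolding \<delta>_def using hwc g by simp
      ultimately show "\<gamma> \<in> K" using wc(2) subgroup.m_closed[OF Ksg] by simp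
    qed
  qed
  then show ?thesis unfolding normally_generated_by_def using S by blast
qed

end


theorem mainTheorem2:
  fixes H :: "('a, 'b) monoid_scheme" and Xs :: "'a set" and N :: "nat \<Rightarrow> 'a set"
  assumes "group H"
    and "finite Xs" and "Xs \<subseteq> carrier H"
    and "\<And>i. N i \<lhd> H"
    and "\<And>i. N (Suc i) \<subseteq> N i"
    and "\<And>i. commutator_subgroup H (carrier H) (N i) = N (Suc i)"
    and "\<And>i. normally_generated_by (H Mod N i) ((\<lambda>x. N i #>\<^bsub>H\<^esub> x) ` Xs)"
  shows "normally_generated_by (inv_limit_quot H N) (inv_limit_map H N ` Xs)"
proof -
  obtain xs where xs: "set xs = Xs" "distinct xs" using finite_distinct_list[OF assms(2)] by blast
  have "setting H Xs N xs"
    unfolding setting_def setting_axioms_def using assms xs by blast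
  then show ?thesis by (rule setting.main)
qed

end
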